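(* Let $P=P(G,[\omega])$ be a toric poset over $G=(V,E)$, let $i,j\in V$, and suppose the toric interval $I=[i,j]^{\mathrm{tor}}$ satisfies $|I|\ge3$. Then \[[i,j]^{\mathrm{tor}}=\{i,j\}\cup\{k\in V: [w|_{\{i,j,k\}}]=[(i,k,j)] \text{ for all } [w]\in\mathcal{L}_{\mathrm{tor}}(P)\}.\]
   Context: Toric poset setup: $V=[n]$; $\mathrm{Acyc}(G)$ acyclic orientations; $[\omega]$ the class under the equivalence generated by converting a source into a sink; toric chambers of the toric graphic arrangement (components of $\mathbb{R}^V/\mathbb{Z}^V$ minus the hyperplanes $\{x_i\equiv x_j\bmod 1\}$, $\{i,j\}\in E$) correspond bijectively to the classes $[\omega]$ (a point $x$ with coordinates in $[0,1)$ gives $i\to j$ iff $x_i<x_j$); $P(G,[\omega])$ is identified with its chamber $c(P)$. Toric chain: $C=\{i_1,\dots,i_m\}\subseteq V$ is a toric chain of $P$ if there is a cyclic equivalence class $[(i_1,\dots,i_m)]$ of linear orderings of $C$ such that for every $x\in c(P)$ (coordinates in $[0,1)$) some cyclic shift $(j_1,\dots,j_m)$ satisfies $0\le x_{j_1}<\cdots<x_{j_m}<1$; we write $P|_C=[(i_1,\dots,i_m)]$. Toric interval: $[i,i]^{\mathrm{tor}}=\{i\}$; for $i\neq j$, $[i,j]^{\mathrm{tor}}=\emptyset$ if $\{i,j\}$ is not a toric chain, and otherwise $[i,j]^{\mathrm{tor}}=\{i,j\}\cup\{k\in V: P|_{\{i,j,k\}}=[(i,k,j)]\}$. A toric poset $P'$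 on $V$ is a total toric extension of $P$ if $c(P')\subseteq c(P)$ and $c(P')$ is a chamber of the toric arrangement of the complete graph $K_V$; such $P'$ are indexed by cyclic classes $[w]=[(w_1,\dots,w_n)]$ of permutations of $V$ (the chamber where $0\le x_{w_1}<\dots<x_{w_n}<1$ up to cyclic shift). $\mathcal{L}_{\mathrm{tor}}(P)$ is the set of total toric extensions, and $[w|_C]$ denotes the cyclic order induced on $C\subseteq V$. *)

theory Defs
  imports Complex_Main
begin

definition simple_graph :: "'a set \<Rightarrow> 'a set set \<Rightarrow> bool" where
  "simple_graph V E \<longleftrightarrow> finite V \<and> (\<forall>e\<in>E. \<exists>a b. a \<noteq> b \<and> a \<in> V \<and> b \<in> V \<and> e = {a, b})"

definition orientation :: "'a set set \<Rightarrow> ('a \<times> 'a) set \<Rightarrow> bool" where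
  "orientation E \<omega> \<longleftrightarrow> (\<forall>(a,b)\<in>\<omega>. {a,b} \<in> E) \<and>
     (\<forall>a b. {a,b} \<in> E \<and> a \<noteq> b \<longrightarrow> ((a,b) \<in> \<omega> \<longleftrightarrow> (b,a) \<notin> \<omega>))"

definition Acyc :: "'a set set \<Rightarrow> ('a \<times> 'a) set set" where
  "Acyc E = {\<omega>. orientation E \<omega> \<and> acyclic \<omega>}"

definition source_to_sink :: "('a \<times> 'a) set \<Rightarrow> ('a \<times> 'a) set \<Rightarrow> bool" where
  "source_to_sink \<omega> \<omega>' \<longleftrightarrow> (\<exists>v. (\<forall>u. (u, v) \<notin> \<omega>) \<and>
      \<omega>' = {(a,b)\<in>\<omega>. a \<noteq> v} \<union> {(b,v) | b. (v,b) \<in> \<omega>})"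

definition toric_equiv :: "('a \<times> 'a) set \<Rightarrow> ('a \<times> 'a) set \<Rightarrow> bool" where
  "toric_equiv = (\<lambda>\<omega> \<omega>'. source_to_sink \<omega> \<omega>' \<or> source_to_sink \<omega>' \<omega>)\<^sup>*\<^sup>*"

text \<open>Representatives of points of R^V/Z^V: coordinates in [0,1) (zero outside V).\<close>
definition torus_pts :: "'a set \<Rightarrow> ('a \<Rightarrow> real) set" where
  "torus_pts V = {x. (\<forall>v\<in>V. 0 \<le> x v \<and> x v < 1) \<and> (\<forall>v. v \<notin> V \<longrightarrow> x v = 0)}"

definition ori_of :: "'a set set \<Rightarrow> ('a \<Rightarrow> real) \<Rightarrow> ('a \<times> 'a) set" where
  "ori_of E x = {(i,j). {i,j} \<in> E \<and> x i < x j}"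

definition tor_chamber :: "'a set \<Rightarrow> 'a set set \<Rightarrow> ('a \<times> 'a) set \<Rightarrow> ('a \<Rightarrow> real) set" where
  "tor_chamber V E \<omega> = {x \<in> torus_pts V. (\<forall>i j. {i,j} \<in> E \<longrightarrow> x i \<noteq> x j)
       \<and> toric_equiv \<omega> (ori_of E x)}"

definition cyc_equiv :: "'a list \<Rightarrow> 'a list \<Rightarrow> bool" where
  "cyc_equiv l l' \<longleftrightarrow> (\<exists>k. l' = rotate k l)"

definition increasing_along :: "('a \<Rightarrow> real) \<Rightarrow> 'a list \<Rightarrow> bool" where
  "increasing_along x l \<longleftrightarrow> sorted_wrt (\<lambda>a b. x a < x b) l"

text \<open>P|_C = [l]: C is a toric chain of P with cyclic order [l].\<close>
definition tor_restrict_is :: "'a set \<Rightarrow> 'a set set \<Rightarrow> ('a \<times> 'a) set \<Rightarrow> 'a set \<Rightarrow> 'a list \<Rightarrow> bool" where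
  "tor_restrict_is V E \<omega> C l \<longleftrightarrow> distinct l \<and> set l = C \<and>
     (\<forall>x\<in>tor_chamber V E \<omega>. \<exists>r. cyc_equiv l r \<and> increasing_along x r)"

definition toric_chain :: "'a set \<Rightarrow> 'a set set \<Rightarrow> ('a \<times> 'a) set \<Rightarrow> 'a set \<Rightarrow> bool" where
  "toric_chain V E \<omega> C \<longleftrightarrow> C \<subseteq> V \<and> (\<exists>l. tor_restrict_is V E \<omega> C l)"

definition tor_interval :: "'a set \<Rightarrow> 'a set set \<Rightarrow> ('a \<times> 'a) set \<Rightarrow> 'a \<Rightarrow> 'a \<Rightarrow> 'a set" where
  "tor_interval V E \<omega> i j =
     (if i = j then {i}
      else if \<not> toric_chain V E \<omega> {i, j} then {}
      else {i, j} \<union> {k \<in> V. tor_restrict_is V E \<omega> {i, j, k} [i, k, j]})"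

text \<open>Chamber of the complete-graph toric arrangement indexed by the cyclic class [w].\<close>
definition total_chamber :: "'a set \<Rightarrow> 'a list \<Rightarrow> ('a \<Rightarrow> real) set" where
  "total_chamber V w = {x \<in> torus_pts V. \<exists>r. cyc_equiv w r \<and> increasing_along x r}"

text \<open>L_tor(P), represented by the permutations w (lists) of V whose classes index
  total toric extensions.\<close>
definition L_tor :: "'a set \<Rightarrow> 'a set set \<Rightarrow> ('a \<times> 'a) set \<Rightarrow> 'a list set" where
  "L_tor V E \<omega> = {w. distinct w \<and> set w = V \<and> total_chamber V w \<subseteq> tor_chamber V E \<omega>}"

definition induced_cyc :: "'a list \<Rightarrow> 'a set \<Rightarrow> 'a list \<Rightarrow> bool" where
  "induced_cyc w C l \<longleftrightarrow> cyc_equiv l (filter (\<lambda>v. v \<in> C) w)"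

end

theory Submission imports Defs begin

fun ordrel :: "'a list \<Rightarrow> ('a \<times> 'a) set" where
  "ordrel [] = {}"
| "ordrel (a # r) = {(a, b) | b. b \<in> set r} \<union> ordrel r"

lemma ordrel_sub: "ordrel r \<subseteq> set r \<times> set r"
  by (induction r) auto

lemma ordrel_snoc: "ordrel (r @ [a]) = ordrel r \<union> {(b, a) | b. b \<in> set r}"
  by (induction r) auto

lemma ordrel_sorted: "sorted_wrt P r \<Longrightarrow> (a, b) \<in> ordrel r \<Longrightarrow> P a b"
  by (induction r) auto

lemma ordrel_total: "a \<in> set r \<Longrightarrow> b \<in> set r \<Longrightarrow> a \<noteq> b \<Longrightarrow> (a, b) \<in> ordrel r \<or> (b, a) \<in> ordrel r"
  by (induction r) auto

lemma sorted_total: "sorted_wrt P r \<Longrightarrow> a \<in> set r \<Longrightarrow> b \<in> set r \<Longrightarrow> a \<noteq> b \<Longrightarrow> P a b \<or> P b a"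
  using ordrel_total ordrel_sorted by metis

definition ord_ori :: "'a set set \<Rightarrow> 'a list \<Rightarrow> ('a \<times> 'a) set" where
  "ord_ori E r = {p \<in> ordrel r. {fst p, snd p} \<in> E}"

lemma ori_of_eq:
  assumes sg: "simple_graph V E" and s: "sorted_wrt (\<lambda>a b. x a \<le> x b) r" and sr: "set r = V"
    and nt: "\<forall>a b. {a,b} \<in> E \<longrightarrow> x a \<noteq> x b"
  shows "ori_of E x = ord_ori E r"
proof -
  have "(a, b) \<in> ori_of E x \<longleftrightarrow> (a, b) \<in> ord_ori E r" for a b
  proof
    assume h: "(a, b) \<in> ori_of E x"
    hence e: "{a,b} \<in> E" and lt: "x a < x b" by (auto simp: ori_of_def)
    from e sg obtain c d where "c \<noteq> d" "c \<in> V" "d \<in> V" "{a,b} = {c,d}"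
      unfolding simple_graph_def by blast
    hence ab: "a \<noteq> b" "a \<in> set r" "b \<in> set r" using sr by (auto simp: doubleton_eq_iff)
    from ordrel_total[OF ab(2,3,1)] show "(a, b) \<in> ord_ori E r"
      using ordrel_sorted[OF s, of b a] lt e by (auto simp: ord_ori_def)
  next
    assume h: "(a, b) \<in> ord_ori E r"
    hence e: "{a,b} \<in> E" and o: "(a,b) \<in> ordrel r" by (auto simp: ord_ori_def)
    have "x a \<le> x b" using ordrel_sorted[OF s o] .
    moreover have "x a \<noteq> x b" using nt e by blast
    ultimately show "(a, b) \<in> ori_of E x" using e by (auto simp: ori_of_def)
  qed
  thus ?thesis by auto
qed

lemma step_sts:
  assumes "distinct (a # r)"
  shows "source_to_sink (ord_ori E (a # r)) (ord_ori E (r @ [a]))"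
  unfolding source_to_sink_def
proof (intro exI[of _ a] conjI)
  show "\<forall>u. (u, a) \<notin> ord_ori E (a # r)"
    using assms ordrel_sub[of r] by (auto simp: ord_ori_def)
  show "ord_ori E (r @ [a]) = {(p, q) \<in> ord_ori E (a # r). p \<noteq> a} \<union> {(b, a) |b. (a, b) \<in> ord_ori E (a # r)}"
    using assms ordrel_sub[of r] by (auto simp: ord_ori_def ordrel_snoc insert_commute)
qed

lemma rot_equiv:
  assumes "distinct w"
  shows "toric_equiv (ord_ori E w) (ord_ori E (rotate m w))"
proof (induction m)
  case 0 thus ?case by (simp add: toric_equiv_def)
next
  case (Suc m)
  show ?case
  proof (cases "rotate m w")
    case Nil thus ?thesis using Suc by (simp add: rotate1_rotate_swap[symmetric])
  next
    case (Cons a r)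
    have d: "distinct (a # r)" using assms Cons by (metis distinct_rotate)
    have "rotate (Suc m) w = r @ [a]" using Cons by (simp add: rotate1_rotate_swap[symmetric])
    thus ?thesis using Suc Cons step_sts[OF d, of E] unfolding toric_equiv_def
      by (metis (mono_tags, lifting) rtranclp.rtrancl_into_rtrancl)
  qed
qed

lemma toric_equiv_sym: "toric_equiv a b \<Longrightarrow> toric_equiv b a"
  unfolding toric_equiv_def
  by (induction rule: rtranclp.induct) (auto intro: converse_rtranclp_into_rtranclp)

lemma toric_equiv_trans: "toric_equiv a b \<Longrightarrow> toric_equiv b c \<Longrightarrow> toric_equiv a c"
  unfolding toric_equiv_def by (rule rtranclp_trans)

lemma sort_in_Ltor:
  assumes sg: "simple_graph V E" and x: "x \<in> tor_chamber V E \<omega>" and d: "distinct l" and sl: "set l = V"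
  shows "sort_key x l \<in> L_tor V E \<omega>"
proof -
  let ?w = "sort_key x l"
  have wd: "distinct ?w" "set ?w = V" using d sl by auto
  have ws: "sorted_wrt (\<lambda>a b. x a \<le> x b) ?w" using sorted_sort_key[of x l] by (simp add: sorted_map)
  have xnt: "\<forall>a b. {a,b} \<in> E \<longrightarrow> x a \<noteq> x b" and xe: "toric_equiv \<omega> (ori_of E x)"
    using x by (auto simp: tor_chamber_def)
  have ox: "ori_of E x = ord_ori E ?w" by (rule ori_of_eq[OF sg ws wd(2) xnt])
  have "y \<in> tor_chamber V E \<omega>" if y: "y \<in> total_chamber V ?w" for y
  proof -
    from y obtain r where yt: "y \<in> torus_pts V" and c: "cyc_equiv ?w r" and inc: "increasing_along y r"
      by (auto simp: total_chamber_def)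
    from c obtain m where rm: "r = rotate m ?w" by (auto simp: cyc_equiv_def)
    have rs: "set r = V" using rm wd by simp
    have ys: "sorted_wrt (\<lambda>a b. y a < y b) r" using inc by (simp add: increasing_along_def)
    have ynt: "\<forall>a b. {a,b} \<in> E \<longrightarrow> y a \<noteq> y b"
    proof (intro allI impI)
      fix a b assume e: "{a,b} \<in> E"
      from e sg obtain c d where "c \<noteq> d" "c \<in> V" "d \<in> V" "{a,b} = {c,d}"
        unfolding simple_graph_def by blast
      hence ab: "a \<noteq> b" "a \<in> set r" "b \<in> set r" using rs by (auto simp: doubleton_eq_iff)
      show "y a \<noteq> y b" using sorted_total[OF ys ab(2,3,1)] by auto
    qed
    have ys': "sorted_wrt (\<lambda>a b. y a \<le> y b) r" using ys by (rule sorted_wrt_mono_rel[rotated]) auto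
    have oy: "ori_of E y = ord_ori E r" by (rule ori_of_eq[OF sg ys' rs ynt])
    have "toric_equiv (ord_ori E ?w) (ord_ori E r)" using rot_equiv[OF wd(1)] rm by simp
    hence "toric_equiv \<omega> (ori_of E y)" using xe ox oy toric_equiv_trans by metis
    thus ?thesis using yt ynt by (auto simp: tor_chamber_def)
  qed
  thus ?thesis using wd by (auto simp: L_tor_def)
qed

lemma exists_point:
  "distinct w \<Longrightarrow> \<exists>y. sorted_wrt (\<lambda>a b. y a < y b) w \<and> (\<forall>v\<in>set w. 0 \<le> y v \<and> y v < (1::real)) \<and> (\<forall>v. v \<notin> set w \<longrightarrow> y v = 0)"
proof (induction w)
  case Nil thus ?case by auto
next
  case (Cons a w)
  then obtain y where y: "sorted_wrt (\<lambda>a b. y a < y b) w" "\<forall>v\<in>set w. 0 \<le> y v \<and> y v < (1::real)" "\<forall>v. v \<notin> set w \<longrightarrow> y v = 0"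
    by auto
  define z where "z v = (if v \<in> set w then (y v + 1) / 2 else 0)" for v
  have "sorted_wrt (\<lambda>a b. z a < z b) w" using y(1)
    by (rule sorted_wrt_mono_rel[rotated]) (auto simp: z_def)
  moreover have "\<forall>v\<in>set w. z a < z v" using Cons.prems y(2) by (auto simp: z_def)
  moreover have "\<forall>v\<in>set (a#w). 0 \<le> z v \<and> z v < 1" using y(2) by (auto simp: z_def)
  moreover have "\<forall>v. v \<notin> set (a#w) \<longrightarrow> z v = 0" by (auto simp: z_def)
  ultimately show ?case by (intro exI[of _ z]) auto
qed

lemma strict_unique:
  assumes "sorted_wrt (\<lambda>a b. y a < (y b::real)) l1" "sorted_wrt (\<lambda>a b. y a < y b) l2" "set l1 = set l2"
  shows "l1 = l2"
proof -
  have m1: "sorted (map y l1)" "distinct (map y l1)" using assms(1) strict_sorted_iff[of "map y l1"]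
    by (auto simp: sorted_wrt_map)
  have m2: "sorted (map y l2)" "distinct (map y l2)" using assms(2) strict_sorted_iff[of "map y l2"]
    by (auto simp: sorted_wrt_map)
  have "map y l1 = map y l2"
    using sorted_distinct_set_unique[OF m1 m2] assms(3) by simp
  moreover have "inj_on y (set l1 \<union> set l2)"
    using sorted_total[OF assms(1)] assms(3) unfolding inj_on_def by (metis Un_absorb less_irrefl)
  ultimately show ?thesis using inj_on_map_eq_map by blast
qed

lemma cyc3: "cyc_equiv [a,b,c] r \<longleftrightarrow> r = [a,b,c] \<or> r = [b,c,a] \<or> r = [c,a,b]"
proof
  assume "cyc_equiv [a,b,c] r"
  then obtain k where "r = rotate k [a,b,c]" by (auto simp: cyc_equiv_def)
  hence "r = rotate (k mod 3) [a,b,c]" by (metis rotate_conv_mod length_Cons list.size(3) numeral_3_eq_3)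
  moreover have "k mod 3 = 0 \<or> k mod 3 = 1 \<or> k mod 3 = 2" by auto
  ultimately show "r = [a,b,c] \<or> r = [b,c,a] \<or> r = [c,a,b]"
    by (auto simp: numeral_2_eq_2 rotate1_def)
next
  assume "r = [a,b,c] \<or> r = [b,c,a] \<or> r = [c,a,b]"
  thus "cyc_equiv [a,b,c] r" unfolding cyc_equiv_def
  proof (elim disjE)
    assume "r = [a,b,c]" thus "\<exists>k. r = rotate k [a,b,c]" by (intro exI[of _ 0]) simp
  next
    assume "r = [b,c,a]" thus "\<exists>k. r = rotate k [a,b,c]" by (intro exI[of _ 1]) simp
  next
    assume "r = [c,a,b]" thus "\<exists>k. r = rotate k [a,b,c]" by (intro exI[of _ 2]) (simp add: numeral_2_eq_2)
  qed
qed

lemma tie1: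
  fixes x :: "'a \<Rightarrow> real"
  assumes "i \<noteq> k" "k \<noteq> j" "i \<noteq> j" "x i \<noteq> x j" "x i = x k"
    and "cyc_equiv [i,k,j] (sort_key x [k,i,j])"
  shows False
proof (cases "x i < x j")
  case True thus False using assms by (simp add: cyc3)
next
  case False thus False using assms by (simp add: cyc3)
qed

lemma tie2:
  fixes x :: "'a \<Rightarrow> real"
  assumes "i \<noteq> k" "k \<noteq> j" "i \<noteq> j" "x i \<noteq> x j" "x k = x j"
    and "cyc_equiv [i,k,j] (sort_key x [i,j,k])"
  shows False
proof (cases "x i < x j")
  case True thus False using assms by (simp add: cyc3)
next
  case False thus False using assms by (simp add: cyc3)
qed

lemma final_cases:
  fixes x :: "'a \<Rightarrow> real"
  assumes "i \<noteq> k" "k \<noteq> j" "i \<noteq> j" "x i \<noteq> x j"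
    and c1: "cyc_equiv [i,k,j] (sort_key x [i,k,j])"
    and "cyc_equiv [i,k,j] (sort_key x [k,i,j])"
    and "cyc_equiv [i,k,j] (sort_key x [i,j,k])"
  shows "\<exists>r. cyc_equiv [i,k,j] r \<and> increasing_along x r"
proof -
  have "x i \<noteq> x k" using tie1[OF assms(1-4) _ assms(6)] by blast
  moreover have "x k \<noteq> x j" using tie2[OF assms(1-4) _ assms(7)] by blast
  ultimately have inj: "inj_on x (set [i,k,j])" using assms(4) by (auto simp: inj_on_def)
  let ?r = "sort_key x [i,k,j]"
  have "distinct (map x ?r)" using inj assms(1-3) by (simp add: distinct_map)
  moreover have "sorted (map x ?r)" by simp
  ultimately have "sorted_wrt (<) (map x ?r)" by (simp add: strict_sorted_iff)
  hence "increasing_along x ?r" by (simp add: increasing_along_def sorted_wrt_map)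
  thus ?thesis using c1 by blast
qed

theorem mainTheorem5:
  fixes V :: "'a set" and E :: "'a set set" and \<omega> :: "('a \<times> 'a) set" and i j :: 'a
  assumes "simple_graph V E"
    and "\<omega> \<in> Acyc E"
    and "i \<in> V" and "j \<in> V"
    and "card (tor_interval V E \<omega> i j) \<ge> 3"
  shows "tor_interval V E \<omega> i j =
           {i, j} \<union> {k \<in> V. \<forall>w \<in> L_tor V E \<omega>. induced_cyc w {i, j, k} [i, k, j]}"
proof -
  note sg = assms(1)
  have ij: "i \<noteq> j"
  proof
    assume "i = j"
    hence "tor_interval V E \<omega> i j = {i}" by (simp add: tor_interval_def)
    thus False using assms(5) by simp
  qed
  have ch: "toric_chain V E \<omega> {i,j}"
  proof (rule ccontr)
    assume "\<not> toric_chain V E \<omega> {i,j}"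
    hence "tor_interval V E \<omega> i j = {}" using ij by (simp add: tor_interval_def)
    thus False using assms(5) by simp
  qed
  have T: "tor_interval V E \<omega> i j = {i, j} \<union> {k \<in> V. tor_restrict_is V E \<omega> {i, j, k} [i, k, j]}"
    using ij ch by (simp add: tor_interval_def)
  have fin: "finite V" using sg by (simp add: simple_graph_def)
  have xij: "x i \<noteq> x j" if x: "x \<in> tor_chamber V E \<omega>" for x
  proof -
    from ch obtain l where l: "tor_restrict_is V E \<omega> {i,j} l" unfolding toric_chain_def by blast
    hence sl: "set l = {i,j}" and all: "\<forall>x\<in>tor_chamber V E \<omega>. \<exists>r. cyc_equiv l r \<and> increasing_along x r"
      unfolding tor_restrict_is_def by blast+
    from all x obtain r where r: "cyc_equiv l r" "increasing_along x r" by blast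
    from r(1) obtain m where "r = rotate m l" unfolding cyc_equiv_def by blast
    hence sr: "set r = {i,j}" using sl by simp
    have "sorted_wrt (\<lambda>a b. x a < x b) r" using r(2) unfolding increasing_along_def .
    from sorted_total[OF this, of i j] sr ij have "x i < x j \<or> x j < x i" by simp
    thus ?thesis by auto
  qed
  have key: "tor_restrict_is V E \<omega> {i, j, k} [i, k, j] \<longleftrightarrow> (\<forall>w \<in> L_tor V E \<omega>. induced_cyc w {i, j, k} [i, k, j])"
    if k: "k \<in> V" "k \<noteq> i" "k \<noteq> j" for k
  proof
    let ?C = "{i,j,k}"
    assume tr: "tor_restrict_is V E \<omega> ?C [i, k, j]"
    show "\<forall>w \<in> L_tor V E \<omega>. induced_cyc w ?C [i, k, j]"
    proof
      fix w assume w: "w \<in> L_tor V E \<omega>"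
      hence wd: "distinct w" "set w = V" and wsub: "total_chamber V w \<subseteq> tor_chamber V E \<omega>"
        by (auto simp: L_tor_def)
      obtain y where y: "sorted_wrt (\<lambda>a b. y a < y b) w" "\<forall>v\<in>set w. 0 \<le> y v \<and> y v < (1::real)"
        "\<forall>v. v \<notin> set w \<longrightarrow> y v = 0" using exists_point[OF wd(1)] by blast
      have "y \<in> total_chamber V w"
        unfolding total_chamber_def torus_pts_def cyc_equiv_def increasing_along_def
        using y wd by (auto intro!: exI[of _ w] exI[of _ 0])
      hence "y \<in> tor_chamber V E \<omega>" using wsub by blast
      then obtain r where r: "cyc_equiv [i,k,j] r" "increasing_along y r"
        using tr by (auto simp: tor_restrict_is_def)
      have sr: "set r = ?C" using r(1) by (auto simp: cyc_equiv_def)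
      have f: "sorted_wrt (\<lambda>a b. y a < y b) (filter (\<lambda>v. v \<in> ?C) w)"
        using y(1) by (simp add: sorted_wrt_filter)
      have sf: "set (filter (\<lambda>v. v \<in> ?C) w) = ?C" using wd k assms(3,4) by auto
      have "filter (\<lambda>v. v \<in> ?C) w = r"
        using strict_unique[OF f _ ] r(2) sf sr by (simp add: increasing_along_def)
      thus "induced_cyc w ?C [i, k, j]" using r(1) by (simp add: induced_cyc_def)
    qed
  next
    let ?C = "{i,j,k}"
    assume h: "\<forall>w \<in> L_tor V E \<omega>. induced_cyc w ?C [i, k, j]"
    obtain rest where rest: "set rest = V - ?C" "distinct rest"
      using finite_distinct_list[of "V - ?C"] fin by auto
    have cq: "cyc_equiv [i,k,j] (sort_key x q)"
      if x: "x \<in> tor_chamber V E \<omega>" and q: "distinct q" "set q = ?C" for x q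
    proof -
      have d: "distinct (q @ rest)" "set (q @ rest) = V" using q rest k assms(3,4) by auto
      have "sort_key x (q @ rest) \<in> L_tor V E \<omega>" by (rule sort_in_Ltor[OF sg x d])
      hence "cyc_equiv [i,k,j] (filter (\<lambda>v. v \<in> ?C) (sort_key x (q @ rest)))"
        using h by (auto simp: induced_cyc_def)
      moreover have "filter (\<lambda>v. v \<in> ?C) (q @ rest) = q" using q rest
        by (simp add: filter_empty_conv)
      ultimately show ?thesis by (simp add: filter_sort)
    qed
    show "tor_restrict_is V E \<omega> ?C [i, k, j]"
      unfolding tor_restrict_is_def
    proof (intro conjI ballI)
      show "distinct [i,k,j]" using k ij by auto
      show "set [i,k,j] = ?C" by auto
      fix x assume x: "x \<in> tor_chamber V E \<omega>"
      show "\<exists>r. cyc_equiv [i,k,j] r \<and> increasing_along x r"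
      proof (rule final_cases)
        show "i \<noteq> k" "k \<noteq> j" "i \<noteq> j" "x i \<noteq> x j" using k ij xij[OF x] by auto
        show "cyc_equiv [i,k,j] (sort_key x [i,k,j])" by (rule cq[OF x]) (use k ij in auto)
        show "cyc_equiv [i,k,j] (sort_key x [k,i,j])" by (rule cq[OF x]) (use k ij in auto)
        show "cyc_equiv [i,k,j] (sort_key x [i,j,k])" by (rule cq[OF x]) (use k ij in auto)
      qed
    qed
  qed
  show ?thesis unfolding T
  proof (intro equalityI subsetI)
    fix k assume "k \<in> {i, j} \<union> {k \<in> V. tor_restrict_is V E \<omega> {i, j, k} [i, k, j]}"
    thus "k \<in> {i, j} \<union> {k \<in> V. \<forall>w \<in> L_tor V E \<omega>. induced_cyc w {i, j, k} [i, k, j]}"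
      using key[of k] by blast
  next
    fix k assume "k \<in> {i, j} \<union> {k \<in> V. \<forall>w \<in> L_tor V E \<omega>. induced_cyc w {i, j, k} [i, k, j]}"
    thus "k \<in> {i, j} \<union> {k \<in> V. tor_restrict_is V E \<omega> {i, j, k} [i, k, j]}"
      using key[of k] by blast
  qed
qed

end
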